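(* Let $l\ge3$ and let $a,b\ge2$ be integers with $a+b=l+1$. Let $G$ be a spanning subgraph of $\widetilde O_{k+1}$ containing no cycle of length $4l+2$. If $C$ is a cycle of length $4a$ in $G$ and $C'$ is a cycle of length $4b$ in $G$ with $E(C)\cap E(C')\ne\emptyset$, then $|D(C)\cap D(C')|\ge 2$.
   Context: $\widetilde O_{k+1}=J(2k+1;k,k+1)$ is the bipartite graph with vertex set $\binom{[2k+1]}{k}\cup\binom{[2k+1]}{k+1}$, with $u,v$ adjacent iff $u\subset v$ or $v\subset u$. The direction $d(uv)$ of an edge $\{u,v\}$ is the single element of $u\,\Delta\, v$. For a subgraph $F$, $D(F)=\{d(e): e\in E(F)\}$. A spanning subgraph has the same vertex set. *)

theory Defs
  imports Main
begin

text \<open>Vertex set of the middle-levels graph J(2k+1;k,k+1) on ground set [2k+1] = {1..2k+1}.\<close>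
definition OV :: "nat \<Rightarrow> nat set set" where
  "OV k = {u. u \<subseteq> {1..2*k+1} \<and> (card u = k \<or> card u = k + 1)}"

definition OE :: "nat \<Rightarrow> nat set set set" where
  "OE k = {{u, v} | u v. u \<in> OV k \<and> v \<in> OV k \<and> (u \<subset> v \<or> v \<subset> u)}"

text \<open>A spanning subgraph is determined by its edge set, a subset of OE k.\<close>
definition spanning_subgraph :: "nat \<Rightarrow> nat set set set \<Rightarrow> bool" where
  "spanning_subgraph k E \<longleftrightarrow> E \<subseteq> OE k"

definition is_cycle :: "nat set set set \<Rightarrow> nat \<Rightarrow> nat set list \<Rightarrow> bool" where
  "is_cycle E n vs \<longleftrightarrow> n \<ge> 3 \<and> length vs = n \<and> distinct vs \<and>
     (\<forall>i<n. {vs ! i, vs ! ((i + 1) mod n)} \<in> E)"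

definition cycle_edges :: "nat set list \<Rightarrow> nat set set set" where
  "cycle_edges vs = {{vs ! i, vs ! ((i + 1) mod length vs)} | i. i < length vs}"

definition dir :: "nat set set \<Rightarrow> nat" where
  "dir e = the_elem (\<Union>e - \<Inter>e)"

definition D :: "nat set set set \<Rightarrow> nat set" where
  "D F = dir ` F"

end

theory Submission
  imports Defs
begin

lemma sub_dir:
  assumes "u \<in> OV k" "v \<in> OV k" "u \<subset> v"
  shows "(u - v) \<union> (v - u) = {dir {u,v}} \<and> dir {v,u} = dir {u,v}"
proof -
  have vs: "v \<subseteq> {1..2*k+1}" using assms(2) unfolding OV_def by simp
  have fv: "finite v" using finite_subset[OF vs] by simp
  have fu: "finite u" using finite_subset[OF _ fv] assms(3) by blast
  have "card u < card v" using psubset_card_mono[OF fv assms(3)] .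
  hence cu: "card u = k" and cv: "card v = k+1" using assms(1,2) unfolding OV_def by auto
  have "card (v - u) = card v - card u" using card_Diff_subset[OF fu] assms(3) by blast
  hence "card (v - u) = 1" using cu cv by simp
  then obtain d where d: "v - u = {d}" by (rule card_1_singletonE)
  have un: "\<Union>{u,v} = v" and it: "\<Inter>{u,v} = u" using assms(3) by auto
  have dd: "dir {u,v} = d" unfolding dir_def un it d by simp
  have uv: "u - v = {}" using assms(3) by blast
  have sw: "{v,u} = {u,v}" by (rule insert_commute)
  show ?thesis unfolding sw dd uv d by simp
qed

lemma edge_dir_aux:
  assumes "u \<in> OV k" "v \<in> OV k" "u \<subset> v \<or> v \<subset> u"
  shows "(u - v) \<union> (v - u) = {dir {u,v}}"
proof (cases "u \<subset> v")
  case True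
  show ?thesis using sub_dir[OF assms(1,2) True] by blast
next
  case False
  hence vu: "v \<subset> u" using assms(3) by simp
  have "(v - u) \<union> (u - v) = {dir {v,u}} \<and> dir {u,v} = dir {v,u}" using sub_dir[OF assms(2,1) vu] .
  hence "(v - u) \<union> (u - v) = {dir {u,v}}" by simp
  thus ?thesis by (simp add: Un_commute)
qed

lemma edge_dir:
  assumes "{p,q} \<in> OE k"
  shows "(p - q) \<union> (q - p) = {dir {p,q}}"
proof -
  have "\<exists>u v. {p,q} = {u,v} \<and> u \<in> OV k \<and> v \<in> OV k \<and> (u \<subset> v \<or> v \<subset> u)"
    using assms unfolding OE_def by (simp only: mem_Collect_eq)
  then obtain u v where e: "{p,q} = {u,v}" "u \<in> OV k" "v \<in> OV k" "u \<subset> v \<or> v \<subset> u"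
    by (elim exE conjE) (rule that)
  from e(1) have "(p = u \<and> q = v) \<or> (p = v \<and> q = u)" by (simp add: doubleton_eq_iff)
  thus ?thesis
  proof
    assume "p = u \<and> q = v"
    thus ?thesis using edge_dir_aux[OF e(2,3,4)] by simp
  next
    assume "p = v \<and> q = u"
    moreover have "v \<subset> u \<or> u \<subset> v" using e(4) by blast
    ultimately show ?thesis using edge_dir_aux[OF e(3,2)] by simp
  qed
qed

lemma ce_iff: "e \<in> cycle_edges xs \<longleftrightarrow> (\<exists>i. e = {xs!i, xs!((i+1) mod length xs)} \<and> i < length xs)"
  unfolding cycle_edges_def by (simp only: mem_Collect_eq)

lemma cyc_edge:
  assumes "is_cycle E n xs" "i < n"
  shows "{xs!i, xs!((i+1) mod n)} \<in> cycle_edges xs" "{xs!i, xs!((i+1) mod n)} \<in> E"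
proof -
  have n: "length xs = n" using assms(1) unfolding is_cycle_def by simp
  show "{xs!i, xs!((i+1) mod n)} \<in> cycle_edges xs" unfolding ce_iff n using assms(2) by (intro exI[of _ i]) simp
  show "{xs!i, xs!((i+1) mod n)} \<in> E" using assms unfolding is_cycle_def by blast
qed

lemma sd_tri: "(a - c) \<union> (c - (a::nat set)) \<subseteq> ((a - b) \<union> (b - a)) \<union> ((b - c) \<union> (c - b))"
  by blast

lemma sd_path_aux:
  assumes "is_cycle E n xs" "E \<subseteq> OE k"
  shows "i + t < n \<Longrightarrow> (xs!i - xs!(i+t)) \<union> (xs!(i+t) - xs!i) \<subseteq> D (cycle_edges xs)"
proof (induction t)
  case 0
  then show ?case by simp
next
  case (Suc t)
  have lt: "i + t < n" using Suc.prems by simp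
  have m: "(i + t + 1) mod n = i + Suc t" using Suc.prems by simp
  have e1: "{xs!(i+t), xs!(i+Suc t)} \<in> cycle_edges xs" using cyc_edge(1)[OF assms(1) lt] m by simp
  have e2: "{xs!(i+t), xs!(i+Suc t)} \<in> OE k" using cyc_edge(2)[OF assms(1) lt] m assms(2) by auto
  have "dir {xs!(i+t), xs!(i+Suc t)} \<in> D (cycle_edges xs)" using e1 unfolding D_def by blast
  hence "(xs!(i+t) - xs!(i+Suc t)) \<union> (xs!(i+Suc t) - xs!(i+t)) \<subseteq> D (cycle_edges xs)"
    using edge_dir[OF e2] by simp
  with Suc.IH[OF lt] sd_tri[of "xs!i" "xs!(i+Suc t)" "xs!(i+t)"] show ?case by (meson Un_least subset_trans)
qed

lemma sd_path:
  assumes "is_cycle E n xs" "E \<subseteq> OE k" "i < n" "j < n"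
  shows "(xs!i - xs!j) \<union> (xs!j - xs!i) \<subseteq> D (cycle_edges xs)"
proof (cases "i \<le> j")
  case True
  then obtain t where "j = i + t" using le_Suc_ex by blast
  then show ?thesis using sd_path_aux[OF assms(1,2), of i t] assms by simp
next
  case False
  then obtain t where "i = j + t" using le_Suc_ex[of j i] by auto
  then show ?thesis using sd_path_aux[OF assms(1,2), of j t] assms by auto
qed

lemma rot_cycle:
  assumes "is_cycle E n xs"
  shows "is_cycle E n (rotate r xs)"
proof -
  have n: "length xs = n" "n \<ge> 3" using assms unfolding is_cycle_def by auto
  have "{rotate r xs ! i, rotate r xs ! ((i+1) mod n)} \<in> E" if "i < n" for i
  proof -
    have a: "rotate r xs ! i = xs ! ((i + r) mod n)" using nth_rotate[of i xs r] that n by (simp add: add.commute)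
    have b: "rotate r xs ! ((i+1) mod n) = xs ! (((i+1) mod n + r) mod n)"
      using nth_rotate[of "(i+1) mod n" xs r] that n by (simp add: add.commute)
    have c1: "((i+1) mod n + r) mod n = (i+1+r) mod n" by (rule mod_add_left_eq)
    have c2: "((i + r) mod n + 1) mod n = (i+r+1) mod n" by (rule mod_add_left_eq)
    have c: "((i+1) mod n + r) mod n = (((i + r) mod n) + 1) mod n" unfolding c1 c2 by (simp add: ac_simps)
    have "(i+r) mod n < n" using n by simp
    from cyc_edge(2)[OF assms this] show ?thesis unfolding a b c .
  qed
  then show ?thesis using assms unfolding is_cycle_def by simp
qed

lemma rev_cycle:
  assumes "is_cycle E n xs"
  shows "is_cycle E n (rev xs)"
proof -
  have n: "length xs = n" "n \<ge> 3" using assms unfolding is_cycle_def by auto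
  have "{rev xs ! i, rev xs ! ((i+1) mod n)} \<in> E" if "i < n" for i
  proof (cases "i + 1 < n")
    case True
    have a: "rev xs ! i = xs ! (n - 1 - i)" using rev_nth[of i xs] that n by simp
    have b: "rev xs ! ((i+1) mod n) = xs ! (n - 2 - i)" using rev_nth[of "i+1" xs] True n by simp
    have c: "(n - 2 - i + 1) mod n = n - 1 - i" using True by simp
    have "{xs ! (n-2-i), xs ! ((n-2-i+1) mod n)} \<in> E" using cyc_edge(2)[OF assms, of "n-2-i"] True by simp
    then show ?thesis using a b c by (simp add: insert_commute)
  next
    case False
    hence i: "i = n - 1" using that by simp
    have a: "rev xs ! i = xs ! 0" using rev_nth[of i xs] i n by simp
    have b: "rev xs ! ((i+1) mod n) = xs ! (n-1)" using rev_nth[of 0 xs] i n by simp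
    have "{xs ! (n-1), xs ! ((n-1+1) mod n)} \<in> E" using cyc_edge(2)[OF assms, of "n-1"] n by simp
    then show ?thesis using a b n by (simp add: insert_commute)
  qed
  then show ?thesis using assms unfolding is_cycle_def by simp
qed

lemma normalize_aux:
  assumes "is_cycle E n xs" "i < n" "xs ! i = p" "xs ! ((i+1) mod n) = q"
  shows "\<exists>ys. is_cycle E n ys \<and> set ys = set xs \<and> ys!0 = q \<and> ys!(n-1) = p"
proof -
  have n: "length xs = n" "n \<ge> 3" using assms unfolding is_cycle_def by auto
  let ?ys = "rotate ((i+1) mod n) xs"
  have "?ys ! 0 = q" using nth_rotate[of 0 xs "(i+1) mod n"] n assms by simp
  moreover have "?ys ! (n-1) = p"
  proof -
    have "?ys ! (n-1) = xs ! ((n - 1 + (i+1) mod n) mod n)" using nth_rotate[of "n-1" xs "(i+1) mod n"] n by (simp add: add.commute)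
    also have "(n - 1 + (i+1) mod n) mod n = i"
    proof -
      have "(n - 1 + (i+1) mod n) mod n = (n - 1 + (i+1)) mod n" by (simp add: mod_simps)
      also have "n - 1 + (i+1) = i + n" using n by simp
      finally show ?thesis using assms(2) by simp
    qed
    finally show ?thesis using assms by simp
  qed
  ultimately show ?thesis using rot_cycle[OF assms(1), of "(i+1) mod n"]
    by (intro exI[where x="?ys"]) simp
qed

lemma normalize:
  assumes "is_cycle E n xs" "{p,q} \<in> cycle_edges xs"
  shows "\<exists>ys. is_cycle E n ys \<and> set ys = set xs \<and> ys!0 = q \<and> ys!(n-1) = p"
proof -
  have n: "length xs = n" "n \<ge> 3" using assms unfolding is_cycle_def by auto
  obtain i where i: "i < n" "{p,q} = {xs!i, xs!((i+1) mod n)}" using assms(2) unfolding ce_iff n by (elim exE conjE) (simp add: that)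
  show ?thesis
  proof (cases "xs!i = p \<and> xs!((i+1) mod n) = q")
    case True
    then show ?thesis using normalize_aux[OF assms(1) i(1)] by blast
  next
    case False
    moreover have "(p = xs!i \<and> q = xs!((i+1) mod n)) \<or> (p = xs!((i+1) mod n) \<and> q = xs!i)"
      using i(2) by (simp add: doubleton_eq_iff)
    ultimately have pq: "xs!i = q" "xs!((i+1) mod n) = p" by auto
    define j where "j = n - 1 - (i+1) mod n"
    have j: "j < n" unfolding j_def using n by simp
    have r1: "rev xs ! j = p"
    proof -
      have "(i+1) mod n < n" using n by simp
      hence "n - Suc j = (i+1) mod n" unfolding j_def by simp
      thus ?thesis using rev_nth[of j xs] j n pq by simp
    qed
    have r2: "rev xs ! ((j+1) mod n) = q"
    proof (cases "i + 1 < n")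
      case True
      hence "j + 1 = n - 1 - i" unfolding j_def by simp
      hence "(j+1) mod n = n - 1 - i" using True by simp
      then show ?thesis using rev_nth[of "n-1-i" xs] n pq i(1) by simp
    next
      case False
      hence "i = n - 1" using i(1) by simp
      hence "j = n - 1" unfolding j_def using n by simp
      hence "(j+1) mod n = 0" using n by simp
      then show ?thesis using rev_nth[of 0 xs] n pq \<open>i = n-1\<close> by simp
    qed
    obtain ys where "is_cycle E n ys" "set ys = set (rev xs)" "ys!0 = q" "ys!(n-1) = p"
      using normalize_aux[OF rev_cycle[OF assms(1)] j r1 r2] by blast
    then show ?thesis by auto
  qed
qed


lemma sd_eq: "(u - x) \<union> (x - u) = (y - x) \<union> (x - y) \<Longrightarrow> u = (y::nat set)"
  by blast

lemma sd_empty: "(u - x) \<union> (x - u) = {} \<Longrightarrow> u = (x::nat set)"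
  by blast

lemma fin_ce: "finite (cycle_edges xs)"
  unfolding cycle_edges_def by (rule finite_image_set) simp

lemma in_ce_vertex:
  assumes "is_cycle E n xs" "{p,q} \<in> cycle_edges xs"
  shows "p \<in> set xs" "q \<in> set xs"
proof -
  have n: "length xs = n" using assms(1) unfolding is_cycle_def by simp
  have n3: "n \<ge> 3" using assms(1) unfolding is_cycle_def by simp
  obtain i where i: "i < n" "{p,q} = {xs!i, xs!((i+1) mod n)}" using assms(2) unfolding ce_iff n by (elim exE conjE) (simp add: that)
  have "xs!i \<in> set xs" "xs!((i+1) mod n) \<in> set xs" using i n n3 by auto
  moreover have "(p = xs!i \<and> q = xs!((i+1) mod n)) \<or> (p = xs!((i+1) mod n) \<and> q = xs!i)"
    using i(2) by (simp add: doubleton_eq_iff)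
  ultimately show "p \<in> set xs" "q \<in> set xs" by auto
qed

theorem lemma5p4:
  fixes k l a b :: nat and E :: "nat set set set" and vs ws :: "nat set list"
  assumes "l \<ge> 3" and "a \<ge> 2" and "b \<ge> 2" and "a + b = l + 1"
    and "spanning_subgraph k E"
    and "\<not> (\<exists>us. is_cycle E (4 * l + 2) us)"
    and "is_cycle E (4 * a) vs" and "is_cycle E (4 * b) ws"
    and "cycle_edges vs \<inter> cycle_edges ws \<noteq> {}"
  shows "card (D (cycle_edges vs) \<inter> D (cycle_edges ws)) \<ge> 2"
proof (rule ccontr)
  assume nc: "\<not> card (D (cycle_edges vs) \<inter> D (cycle_edges ws)) \<ge> 2"
  define n where "n = 4 * a"
  define m where "m = 4 * b"
  have EO: "E \<subseteq> OE k" using assms(5) unfolding spanning_subgraph_def .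
  have cv: "is_cycle E n vs" and cw: "is_cycle E m ws" using assms(7,8) unfolding n_def m_def by auto
  have ln: "length vs = n" and lm: "length ws = m" using cv cw unfolding is_cycle_def by auto
  have n8: "n \<ge> 8" and m8: "m \<ge> 8" using assms(2,3) unfolding n_def m_def by auto
  obtain e where e1: "e \<in> cycle_edges vs" and e2: "e \<in> cycle_edges ws" using assms(9) by blast
  obtain i where i: "i < n" "e = {vs!i, vs!((i+1) mod n)}" using e1 unfolding ce_iff ln by (elim exE conjE) (simp add: that)
  define x where "x = vs!i"
  define y where "y = vs!((i+1) mod n)"
  have exy: "e = {x,y}" using i unfolding x_def y_def by simp
  have eE: "e \<in> E" using cyc_edge(2)[OF cv i(1)] i(2) by simp
  hence eO: "{x,y} \<in> OE k" using EO exy by auto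
  define d where "d = dir {x,y}"
  have sdxy: "(x - y) \<union> (y - x) = {d}" using edge_dir[OF eO] unfolding d_def .
  define A where "A = D (cycle_edges vs) \<inter> D (cycle_edges ws)"
  have dA: "d \<in> A" using e1 e2 exy unfolding A_def D_def d_def by auto
  have finA: "finite A" unfolding A_def D_def using fin_ce by auto
  have "card A \<ge> 1" using dA finA by (metis One_nat_def Suc_leI card_gt_0_iff empty_iff)
  hence "card A = 1" using nc unfolding A_def by simp
  then obtain z where "A = {z}" by (rule card_1_singletonE)
  hence Ad: "A = {d}" using dA by simp
  have e1': "{x,y} \<in> cycle_edges vs" using e1 exy by simp
  have e2': "{x,y} \<in> cycle_edges ws" using e2 exy by simp
  have xv: "x \<in> set vs" using in_ce_vertex(1)[OF cv e1'] .
  have xw: "x \<in> set ws" using in_ce_vertex(1)[OF cw e2'] .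
  have common: "u = x \<or> u = y" if u1: "u \<in> set vs" and u2: "u \<in> set ws" for u
  proof -
    obtain s where s: "s < n" "u = vs!s" using u1 unfolding in_set_conv_nth ln by blast
    obtain s' where s': "s' < m" "u = ws!s'" using u2 unfolding in_set_conv_nth lm by blast
    obtain t where t: "t < n" "x = vs!t" using xv unfolding in_set_conv_nth ln by blast
    obtain t' where t': "t' < m" "x = ws!t'" using xw unfolding in_set_conv_nth lm by blast
    have "(u - x) \<union> (x - u) \<subseteq> D (cycle_edges vs)" using sd_path[OF cv EO s(1) t(1)] s t by simp
    moreover have "(u - x) \<union> (x - u) \<subseteq> D (cycle_edges ws)" using sd_path[OF cw EO s'(1) t'(1)] s' t' by simp
    ultimately have "(u - x) \<union> (x - u) \<subseteq> {d}" using Ad unfolding A_def by blast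
    hence "(u - x) \<union> (x - u) = {} \<or> (u - x) \<union> (x - u) = {d}" by blast
    thus ?thesis
    proof
      assume "(u - x) \<union> (x - u) = {}" thus ?thesis using sd_empty by blast
    next
      assume "(u - x) \<union> (x - u) = {d}"
      hence "(u - x) \<union> (x - u) = (y - x) \<union> (x - y)" using sdxy by blast
      thus ?thesis using sd_eq by blast
    qed
  qed
  obtain vs' where v': "is_cycle E n vs'" "set vs' = set vs" "vs'!0 = y" "vs'!(n-1) = x"
    using normalize[OF cv, of x y] e1 exy by blast
  have "{y,x} \<in> cycle_edges ws" using e2 exy by (simp add: insert_commute)
  then obtain ws' where w': "is_cycle E m ws'" "set ws' = set ws" "ws'!0 = x" "ws'!(m-1) = y"
    using normalize[OF cw, of y x] by blast
  have ln': "length vs' = n" and lm': "length ws' = m" and dv: "distinct vs'" and dw: "distinct ws'"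
    using v'(1) w'(1) unfolding is_cycle_def by auto
  define mid where "mid = take (m-2) (drop 1 ws')"
  have lmid: "length mid = m - 2" unfolding mid_def using lm' m8 by simp
  have nmid: "mid ! s = ws' ! (s+1)" if "s < m - 2" for s
    unfolding mid_def using that lm' by (simp add: add.commute)
  define us where "us = vs' @ mid"
  define N where "N = 4 * l + 2"
  have NN: "N = n + m - 2" unfolding N_def n_def m_def using assms(4) by simp
  have lus: "length us = N" unfolding us_def using ln' lmid NN m8 by simp
  have dmid: "distinct mid" unfolding mid_def using dw by simp
  have disj: "set vs' \<inter> set mid = {}"
  proof (rule ccontr)
    assume "set vs' \<inter> set mid \<noteq> {}"
    then obtain z where z1: "z \<in> set vs'" and z2: "z \<in> set mid" by blast
    obtain s where s: "s < m - 2" "z = mid ! s" using z2 unfolding in_set_conv_nth lmid by blast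
    have zw: "z = ws' ! (s+1)" using nmid s by simp
    have s1: "s+1 < length ws'" using s lm' by simp
    have "z \<in> set ws'" unfolding zw using s1 by (rule nth_mem)
    hence "z \<in> set ws" using w'(2) by simp
    hence "z = x \<or> z = y" using common z1 v'(2) by blast
    moreover have "ws' ! (s+1) \<noteq> ws' ! 0" using dw lm' s by (simp add: nth_eq_iff_index_eq)
    moreover have "ws' ! (s+1) \<noteq> ws' ! (m-1)" using dw lm' s by (simp add: nth_eq_iff_index_eq)
    ultimately show False using zw w'(3,4) by auto
  qed
  have dus: "distinct us" unfolding us_def using dv dmid disj by simp
  have edges: "{us ! t, us ! ((t+1) mod N)} \<in> E" if t: "t < N" for t
  proof -
    consider (a) "t < n - 1" | (b) "t = n - 1" | (c) "n \<le> t \<and> t < N - 1" | (d) "t = N - 1"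
      using t NN m8 n8 by linarith
    then show ?thesis
    proof cases
      case a
      have "(t+1) mod N = t + 1" using a NN m8 by simp
      moreover have "us ! t = vs' ! t" "us ! (t+1) = vs' ! (t+1)" unfolding us_def using a ln' by (auto simp: nth_append)
      moreover have "(t+1) mod n = t+1" using a by simp
      ultimately show ?thesis using cyc_edge(2)[OF v'(1), of t] a by simp
    next
      case b
      have "(t+1) mod N = n" using b NN m8 n8 by simp
      moreover have "us ! t = x" unfolding us_def using b ln' v'(4) n8 by (simp add: nth_append)
      moreover have "us ! n = ws' ! 1" unfolding us_def using ln' nmid[of 0] m8 by (simp add: nth_append)
      moreover have "{ws'!0, ws'!((0+1) mod m)} \<in> E" using cyc_edge(2)[OF w'(1), of 0] m8 by simp
      ultimately show ?thesis using w'(3) m8 by simp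
    next
      case c
      have modN: "(t+1) mod N = t + 1" using c by (intro mod_less) linarith
      have q1: "t - n < m - 2" using c NN m8 by linarith
      have q2: "t + 1 - n < m - 2" using c NN m8 by linarith
      have q3: "\<not> t + 1 < n" using c by simp
      have "us ! t = mid ! (t - n)" unfolding us_def using c ln' by (simp add: nth_append)
      moreover have "us ! (t+1) = mid ! (t + 1 - n)" unfolding us_def using q3 ln' by (simp add: nth_append)
      moreover have "t + 1 - n = t - n + 1" using c by linarith
      moreover have "((t - n + 1) + 1) mod m = t - n + 2" using q1 by simp
      moreover have "t - n + 1 < m" using q1 by simp
      moreover note nmid[OF q1] nmid[OF q2] modN
      ultimately show ?thesis using cyc_edge(2)[OF w'(1), of "t - n + 1"]
        by (simp add: numeral_2_eq_2)
    next
      case d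
      have tN: "t + 1 = N" using d NN m8 by linarith
      have "(t+1) mod N = 0" unfolding tN by simp
      moreover have "us ! 0 = y" unfolding us_def using ln' v'(3) n8 by (simp add: nth_append)
      moreover have "us ! t = ws' ! (m - 2)"
      proof -
        have "t = n + (m - 3)" "\<not> t < n" using tN NN m8 by linarith+
        hence "us ! t = mid ! (m - 3)" unfolding us_def using ln' by (simp add: nth_append)
        also have "\<dots> = ws' ! (m - 3 + 1)" using nmid[of "m-3"] m8 by simp
        also have "m - 3 + 1 = m - 2" using m8 by simp
        finally show ?thesis .
      qed
      moreover have "(m - 2 + 1) mod m = m - 1" using m8 by simp
      moreover have "{ws'!(m-2), ws'!((m - 2 + 1) mod m)} \<in> E" using cyc_edge(2)[OF w'(1), of "m-2"] m8 by simp
      ultimately show ?thesis using w'(4) by simp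
    qed
  qed
  have "is_cycle E N us" unfolding is_cycle_def using lus dus edges N_def assms(1) by simp
  thus False using assms(6) unfolding N_def by blast
qed

end
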